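(* Let $k\ge2$ and $n,t,m_0\ge1$ be integers, and let $\varepsilon\in(0,1)$ and $d,\varepsilon^*>0$ satisfy $d+k\varepsilon^*\le\varepsilon/2$ and $\sqrt{\varepsilon^*}\le\varepsilon/4$. Let $H$ be a $k$-partite $k$-graph with parts $V_1,\dots,V_k$, each of size $n$, such that $\delta'_{k-1}(H)\ge(\frac12+\varepsilon)n$. Suppose $V(H)=V_0\cup W_1\cup\dots\cup W_{kt}$ is a partition such that $|V_0|\le \varepsilon^* kn$, each $V_i\setminus V_0$ is the union of exactly $t$ of the clusters $W_1,\dots,W_{kt}$, all clusters have the same size $m_0$, and all but at most $\varepsilon^*(kt)^k$ of the legal $k$-sets $\{j_1,\dots,j_k\}\subseteq[kt]$ have $(W_{j_1},\dots,W_{j_k})$ $\varepsilon^*$-regular. Let $\mathcal R=\mathcal R(\varepsilon^*,d)$ be the corresponding cluster hypergraph. Then the number of legal $(k-1)$-sets $S\subseteq[kt]$ with $\deg_{\mathcal R}(S)<(\frac12+\frac{\varepsilon}{4})t$ is at most $k^{k+1}\sqrt{\varepsilon^*}\,t^{k-1}$.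
   Context: A $k$-partite $k$-graph $H$ is a $k$-graph with a fixed partition $V(H)=V_1\cup\dots\cup V_k$ such that every edge meets each $V_i$ in at most one vertex. A set $S$ is legal if $|S\cap V_i|\le1$ for all $i$. $\deg_H(S)$ is the number of $(k-|S|)$-sets $S'$ with $S\cup S'\in E(H)$; $\delta'_{k-1}(H)$ is the minimum of $\deg_H(S)$ over legal $(k-1)$-sets. For pairwise disjoint $A_1,\dots,A_k\subseteq V(H)$, $e_H(A_1,\dots,A_k)$ is the number of $(a_1,\dots,a_k)\in A_1\times\dots\times A_k$ with $\{a_1,\dots,a_k\}\in E(H)$, and $d_H(A_1,\dots,A_k)=e_H(A_1,\dots,A_k)/(|A_1|\cdots|A_k|)$. A $k$-tuple $(U_1,\dots,U_k)$ of disjoint sets is $(\varepsilon^*,d')$-regular if $|d_H(A_1,\dots,A_k)-d'|\le\varepsilon^*$ for all $A_i\subseteq U_i$ with $|A_i|\ge\varepsilon^*|U_i|$, and $\varepsilon^*$-regular if it is $(\varepsilon^*,d')$-regular for some $d'\ge0$. In the setting of the statement, an index set $S\subseteq[kt]$ is legal if its clusters lie in distinct parts $V_i$; the cluster hypergraph $\mathcal R(\varepsilon^*,d)$ is the $k$-partite $k$-graph on vertex set $[kt]$ (with the $t$ indices of clusters inside $V_i$ forming its $i$-th part) whose edges are the legal $k$-sets $\{j_1,\dots,j_k\}$ such that $(W_{j_1},\dots,W_{j_k})$ is $\varepsilon^*$-regular and $d_H(W_{j_1},\dots,W_{j_k})\ge d$. *)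

theory Defs
  imports "HOL-Library.FuncSet" Complex_Main
begin

definition legal :: "nat \<Rightarrow> (nat \<Rightarrow> 'a set) \<Rightarrow> 'a set \<Rightarrow> bool" where
  "legal k P S \<longleftrightarrow> (\<forall>i<k. card (S \<inter> P i) \<le> 1)"

definition kpartite_kgraph ::
  "nat \<Rightarrow> 'a set \<Rightarrow> (nat \<Rightarrow> 'a set) \<Rightarrow> 'a set set \<Rightarrow> bool" where
  "kpartite_kgraph k V P E \<longleftrightarrow>
     finite V \<and> (\<forall>i<k. P i \<subseteq> V) \<and> V = (\<Union>i<k. P i) \<and>
     (\<forall>i<k. \<forall>j<k. i \<noteq> j \<longrightarrow> P i \<inter> P j = {}) \<and>
     (\<forall>e\<in>E. e \<subseteq> V \<and> card e = k \<and> legal k P e)"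

definition deg :: "nat \<Rightarrow> 'a set set \<Rightarrow> 'a set \<Rightarrow> nat" where
  "deg k E S = card {S'. card S' = k - card S \<and> S \<union> S' \<in> E}"

definition min_legal_codeg :: "nat \<Rightarrow> 'a set \<Rightarrow> (nat \<Rightarrow> 'a set) \<Rightarrow> 'a set set \<Rightarrow> nat" where
  "min_legal_codeg k V P E =
     Min {deg k E S | S. S \<subseteq> V \<and> card S = k - 1 \<and> legal k P S}"

definition e_count :: "nat \<Rightarrow> 'a set set \<Rightarrow> (nat \<Rightarrow> 'a set) \<Rightarrow> nat" where
  "e_count k E A = card {f \<in> PiE {..<k} A. f ` {..<k} \<in> E}"

definition density :: "nat \<Rightarrow> 'a set set \<Rightarrow> (nat \<Rightarrow> 'a set) \<Rightarrow> real" where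
  "density k E A = real (e_count k E A) / (\<Prod>i<k. real (card (A i)))"

definition regular_with :: "nat \<Rightarrow> 'a set set \<Rightarrow> real \<Rightarrow> real \<Rightarrow> (nat \<Rightarrow> 'a set) \<Rightarrow> bool" where
  "regular_with k E eps d' U \<longleftrightarrow>
     (\<forall>A. (\<forall>i<k. A i \<subseteq> U i \<and> real (card (A i)) \<ge> eps * real (card (U i)))
          \<longrightarrow> \<bar>density k E A - d'\<bar> \<le> eps)"

definition eps_regular :: "nat \<Rightarrow> 'a set set \<Rightarrow> real \<Rightarrow> (nat \<Rightarrow> 'a set) \<Rightarrow> bool" where
  "eps_regular k E eps U \<longleftrightarrow> (\<exists>d'\<ge>0. regular_with k E eps d' U)"

definition cluster_parts :: "nat \<Rightarrow> (nat \<Rightarrow> 'a set) \<Rightarrow> (nat \<Rightarrow> 'a set) \<Rightarrow> nat \<Rightarrow> nat set" where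
  "cluster_parts N P W i = {j \<in> {1..N}. W j \<subseteq> P i}"

definition cluster_tuple :: "(nat \<Rightarrow> 'a set) \<Rightarrow> nat set \<Rightarrow> nat \<Rightarrow> 'a set" where
  "cluster_tuple W J = (\<lambda>i. W (sorted_list_of_set J ! i))"

definition cluster_edges ::
  "nat \<Rightarrow> nat \<Rightarrow> (nat \<Rightarrow> 'a set) \<Rightarrow> 'a set set \<Rightarrow> (nat \<Rightarrow> 'a set) \<Rightarrow> real \<Rightarrow> real \<Rightarrow> nat set set" where
  "cluster_edges k t P E W epss d =
     {J. J \<subseteq> {1..k*t} \<and> card J = k \<and> legal k (cluster_parts (k*t) P W) J \<and>
         eps_regular k E epss (cluster_tuple W J) \<and>
         density k E (cluster_tuple W J) \<ge> d}"

end

theory Submission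
  imports Defs
begin

lemma ecount_reindex:
  assumes bij: "bij_betw h I J"
  shows "card {f \<in> PiE I (\<lambda>i. W (h i)). f ` I \<in> E} = card {g \<in> PiE J W. g ` J \<in> E}"
proof -
  let ?F = "\<lambda>g. restrict (\<lambda>x. g (h x)) I"
  let ?G = "\<lambda>f. restrict (\<lambda>y. f (inv_into I h y)) J"
  have hI: "\<And>x. x \<in> I \<Longrightarrow> h x \<in> J" using bij by (auto simp: bij_betw_def)
  have inv1: "\<And>x. x \<in> I \<Longrightarrow> inv_into I h (h x) = x" using bij by (auto simp: bij_betw_def)
  have inv2: "\<And>y. y \<in> J \<Longrightarrow> h (inv_into I h y) = y" using bij by (meson bij_betw_inv_into_right)
  have inv3: "\<And>y. y \<in> J \<Longrightarrow> inv_into I h y \<in> I" using bij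
    by (metis bij_betw_def inv_into_into)
  have img1: "\<And>g. (?F g) ` I = g ` J" 
  proof -
    fix g
    have "(?F g) ` I = g ` (h ` I)" by (auto simp: image_iff)
    then show "(?F g) ` I = g ` J" using bij by (simp add: bij_betw_def)
  qed
  have "bij_betw ?F {g \<in> PiE J W. g ` J \<in> E} {f \<in> PiE I (\<lambda>i. W (h i)). f ` I \<in> E}"
  proof (rule bij_betw_byWitness)
    show "\<forall>a\<in>{g \<in> PiE J W. g ` J \<in> E}. ?G (?F a) = a"
      by (auto intro!: PiE_ext[where k=J and s=W] simp: inv2 inv3)
    show "\<forall>a\<in>{f \<in> PiE I (\<lambda>i. W (h i)). f ` I \<in> E}. ?F (?G a) = a"
      by (auto intro!: PiE_ext[where k=I and s="\<lambda>i. W (h i)"] simp: inv1 hI)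
    show "?F ` {g \<in> PiE J W. g ` J \<in> E} \<subseteq> {f \<in> PiE I (\<lambda>i. W (h i)). f ` I \<in> E}"
    proof (rule image_subsetI)
      fix g assume "g \<in> {g \<in> PiE J W. g ` J \<in> E}"
      then have g: "g \<in> PiE J W" "g ` J \<in> E" by auto
      have "?F g \<in> PiE I (\<lambda>i. W (h i))" using g hI by (auto simp: PiE_iff)
      then show "?F g \<in> {f \<in> PiE I (\<lambda>i. W (h i)). f ` I \<in> E}" using g img1[of g] by simp
    qed
    show "?G ` {f \<in> PiE I (\<lambda>i. W (h i)). f ` I \<in> E} \<subseteq> {g \<in> PiE J W. g ` J \<in> E}"
    proof (rule image_subsetI)
      fix f assume "f \<in> {f \<in> PiE I (\<lambda>i. W (h i)). f ` I \<in> E}"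
      then have f: "f \<in> PiE I (\<lambda>i. W (h i))" "f ` I \<in> E" by auto
      have "?G f \<in> PiE J W"
      proof -
        have "\<And>y. y \<in> J \<Longrightarrow> f (inv_into I h y) \<in> W y"
          using f inv2 inv3 by (metis PiE_mem)
        then show ?thesis by (simp add: PiE_iff)
      qed
      moreover have "(?G f) ` J = f ` I"
      proof -
        have "(?G f) ` J = f ` (inv_into I h ` J)" by (auto simp: image_iff)
        also have "inv_into I h ` J = I" using bij
          by (metis bij_betw_def bij_betw_inv_into)
        finally show ?thesis .
      qed
      ultimately show "?G f \<in> {g \<in> PiE J W. g ` J \<in> E}" using f by auto
    qed
  qed
  from bij_betw_same_card[OF this] show ?thesis by simp
qed


locale setup6 =
  fixes k n t m0 :: nat and eps d epss :: real
    and V V0 :: "'a set" and P W :: "nat \<Rightarrow> 'a set" and E :: "'a set set"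
  assumes k2: "k \<ge> 2" and n1: "n \<ge> 1" and t1: "t \<ge> 1" and m01: "m0 \<ge> 1"
    and eps0: "0 < eps" and eps1: "eps < 1" and d0: "d > 0" and epss0: "epss > 0"
    and par1: "d + real k * epss \<le> eps / 2" and par2: "sqrt epss \<le> eps / 4"
    and H: "kpartite_kgraph k V P E"
    and parts_size: "\<forall>i<k. card (P i) = n"
    and mindeg: "real (min_legal_codeg k V P E) \<ge> (1/2 + eps) * real n"
    and cover: "V = V0 \<union> (\<Union>j\<in>{1..k*t}. W j)"
    and disj0: "\<forall>j\<in>{1..k*t}. V0 \<inter> W j = {}"
    and disjW: "\<forall>j\<in>{1..k*t}. \<forall>j'\<in>{1..k*t}. j \<noteq> j' \<longrightarrow> W j \<inter> W j' = {}"
    and V0_small: "real (card V0) \<le> epss * real k * real n"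
    and parts_union: "\<forall>i<k. \<exists>J\<subseteq>{1..k*t}. card J = t \<and> P i - V0 = (\<Union>j\<in>J. W j)"
    and cl_size: "\<forall>j\<in>{1..k*t}. card (W j) = m0"
begin

definition Jp :: "nat \<Rightarrow> nat set" where
  "Jp i = (SOME J. J\<subseteq>{1..k*t} \<and> card J = t \<and> P i - V0 = (\<Union>j\<in>J. W j))"

lemma Jp: assumes "i < k"
  shows "Jp i \<subseteq> {1..k*t}" "card (Jp i) = t" "P i - V0 = (\<Union>j\<in>Jp i. W j)"
proof -
  have "\<exists>J. J\<subseteq>{1..k*t} \<and> card J = t \<and> P i - V0 = (\<Union>j\<in>J. W j)" using parts_union assms by auto
  from someI_ex[OF this] show "Jp i \<subseteq> {1..k*t}" "card (Jp i) = t" "P i - V0 = (\<Union>j\<in>Jp i. W j)"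
    unfolding Jp_def by auto
qed

lemma finV: "finite V" and PV: "i < k \<Longrightarrow> P i \<subseteq> V" and VP: "V = (\<Union>i<k. P i)"
  and Pdisj: "i < k \<Longrightarrow> i' < k \<Longrightarrow> i \<noteq> i' \<Longrightarrow> P i \<inter> P i' = {}"
  and Eprops: "e \<in> E \<Longrightarrow> e \<subseteq> V \<and> card e = k \<and> legal k P e"
  using H unfolding kpartite_kgraph_def by auto

lemma Wfin: "j \<in> {1..k*t} \<Longrightarrow> finite (W j)"
  using cover finV by (metis UN_I Un_upper2 finite_subset subsetI)

lemma Wne: "j \<in> {1..k*t} \<Longrightarrow> W j \<noteq> {}"
  using cl_size m01 by fastforce

lemma WP: "i < k \<Longrightarrow> j \<in> Jp i \<Longrightarrow> W j \<subseteq> P i"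
  using Jp(3) by blast

lemma Jp_disj: "i < k \<Longrightarrow> i' < k \<Longrightarrow> i \<noteq> i' \<Longrightarrow> Jp i \<inter> Jp i' = {}"
proof (rule ccontr)
  assume a: "i < k" "i' < k" "i \<noteq> i'" "Jp i \<inter> Jp i' \<noteq> {}"
  then obtain j where j: "j \<in> Jp i" "j \<in> Jp i'" by auto
  then have "j \<in> {1..k*t}" using Jp(1)[OF a(1)] by blast
  then obtain x where "x \<in> W j" using Wne by auto
  then show False using WP[OF a(1) j(1)] WP[OF a(2) j(2)] Pdisj[OF a(1-3)] by auto
qed

lemma Jp_cover: assumes "j \<in> {1..k*t}" shows "\<exists>i<k. j \<in> Jp i"
proof -
  obtain x where x: "x \<in> W j" using Wne assms by auto
  have "x \<in> V" using cover x assms by auto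
  then obtain i where i: "i < k" "x \<in> P i" using VP by auto
  have "x \<notin> V0" using disj0 assms x by auto
  then obtain j' where j': "j' \<in> Jp i" "x \<in> W j'" using Jp(3)[OF i(1)] i by auto
  have "j' \<in> {1..k*t}" using Jp(1)[OF i(1)] j' by auto
  then have "j = j'" using disjW assms x j' by blast
  then show ?thesis using i j' by auto
qed

lemma cp: assumes "i < k" shows "cluster_parts (k*t) P W i = Jp i"
proof
  show "Jp i \<subseteq> cluster_parts (k * t) P W i"
    using Jp(1)[OF assms] WP[OF assms] unfolding cluster_parts_def by auto
  show "cluster_parts (k * t) P W i \<subseteq> Jp i"
  proof
    fix j assume "j \<in> cluster_parts (k * t) P W i"
    then have j: "j \<in> {1..k*t}" "W j \<subseteq> P i" unfolding cluster_parts_def by auto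
    obtain i' where i': "i' < k" "j \<in> Jp i'" using Jp_cover[OF j(1)] by auto
    obtain x where x: "x \<in> W j" using Wne j by auto
    have "i = i'" using Pdisj[OF assms i'(1)] WP[OF i'] j(2) x by auto
    then show "j \<in> Jp i" using i' by simp
  qed
qed

lemma legalC_iff: "legal k (cluster_parts (k*t) P W) S \<longleftrightarrow> (\<forall>i<k. card (S \<inter> Jp i) \<le> 1)"
  unfolding legal_def using cp by auto


lemma card_split_Jp: assumes "S \<subseteq> {1..k*t}"
  shows "card S = (\<Sum>i<k. card (S \<inter> Jp i))"
proof -
  have fin: "finite S" using assms finite_subset by blast
  have "S = (\<Union>i\<in>{..<k}. S \<inter> Jp i)" using Jp_cover assms by blast
  then have "card S = card (\<Union>i\<in>{..<k}. S \<inter> Jp i)" by simp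
  also have "\<dots> = (\<Sum>i<k. card (S \<inter> Jp i))"
    by (rule card_UN_disjoint) (use fin Jp_disj in auto)
  finally show ?thesis .
qed

lemma missing:
  assumes S: "S \<subseteq> {1..k*t}" "card S = k - 1" "\<forall>i<k. card (S \<inter> Jp i) \<le> 1"
  shows "\<exists>i<k. S \<inter> Jp i = {} \<and> (\<forall>i'<k. i' \<noteq> i \<longrightarrow> card (S \<inter> Jp i') = 1)"
proof -
  let ?c = "\<lambda>i. card (S \<inter> Jp i)"
  have fin: "finite S" using S finite_subset by blast
  have cs: "(\<Sum>i<k. ?c i) = k - 1" using card_split_Jp[OF S(1)] S(2) by simp
  have "\<exists>i<k. ?c i = 0"
  proof (rule ccontr)
    assume "\<not> ?thesis"
    then have "\<forall>i<k. 1 \<le> ?c i" by auto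
    then have "(\<Sum>i<k. (1::nat)) \<le> (\<Sum>i<k. ?c i)" by (intro sum_mono) auto
    then show False using cs k2 by simp
  qed
  then obtain i where i: "i < k" "?c i = 0" by auto
  have e: "S \<inter> Jp i = {}" using i fin by simp
  have "\<forall>i'<k. i' \<noteq> i \<longrightarrow> ?c i' = 1"
  proof (intro allI impI, rule ccontr)
    fix i' assume i': "i' < k" "i' \<noteq> i" "?c i' \<noteq> 1"
    then have c0: "?c i' = 0" using S(3) by (meson le_neq_implies_less less_one)
    have "(\<Sum>i<k. ?c i) = ?c i + (\<Sum>x\<in>{..<k} - {i}. ?c x)"
      using i by (simp add: sum.remove)
    also have "(\<Sum>x\<in>{..<k} - {i}. ?c x) = ?c i' + (\<Sum>x\<in>{..<k} - {i} - {i'}. ?c x)"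
      using i' by (intro sum.remove) auto
    also have "(\<Sum>x\<in>{..<k} - {i} - {i'}. ?c x) \<le> card ({..<k} - {i} - {i'})"
      using sum_bounded_above[of "{..<k} - {i} - {i'}" ?c 1] S(3) by auto
    also have "card ({..<k} - {i} - {i'}) = k - 2" using i i' by (simp add: card_Diff_subset)
    finally have "(\<Sum>i<k. ?c i) \<le> k - 2" using i(2) c0 by simp
    then show False using cs k2 by simp
  qed
  then show ?thesis using i e by auto
qed


definition Irr :: "nat set set" where
  "Irr = {J. J \<subseteq> {1..k*t} \<and> card J = k \<and> legal k (cluster_parts (k*t) P W) J \<and>
              \<not> eps_regular k E epss (cluster_tuple W J)}"

definition ec :: "nat set \<Rightarrow> nat" where
  "ec J = card {g \<in> PiE J W. g ` J \<in> E}"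

lemma ec_props:
  assumes J: "J \<subseteq> {1..k*t}" "card J = k"
  shows "e_count k E (cluster_tuple W J) = ec J"
    "density k E (cluster_tuple W J) = real (ec J) / real m0 ^ k"
    "ec J \<le> m0 ^ k"
proof -
  let ?s = "sorted_list_of_set J"
  have fin: "finite J" using J finite_subset by blast
  have ds: "distinct ?s" "set ?s = J" "length ?s = k" using fin J by auto
  have bij: "bij_betw ((!) ?s) {..<k} J" by (rule bij_betw_nth) (use ds in auto)
  show e: "e_count k E (cluster_tuple W J) = ec J"
    unfolding e_count_def cluster_tuple_def ec_def using ecount_reindex[OF bij, of W E] by simp
  have "(\<Prod>i<k. real (card (cluster_tuple W J i))) = (\<Prod>i<k. real m0)"
  proof (rule prod.cong)
    fix i assume "i \<in> {..<k}"
    then have "?s ! i \<in> J" using ds by (metis lessThan_iff nth_mem)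
    then show "real (card (cluster_tuple W J i)) = real m0" using J cl_size
      unfolding cluster_tuple_def by auto
  qed simp
  then show "density k E (cluster_tuple W J) = real (ec J) / real m0 ^ k"
    unfolding density_def e by simp
  have "ec J \<le> card (PiE J W)" unfolding ec_def
    by (rule card_mono) (use fin Wfin J in \<open>auto intro!: finite_PiE\<close>)
  also have "card (PiE J W) = (\<Prod>a\<in>J. card (W a))" by (rule card_PiE[OF fin])
  also have "\<dots> = (\<Prod>a\<in>J. m0)" using J cl_size by (intro prod.cong) auto
  also have "\<dots> = m0 ^ k" using J by simp
  finally show "ec J \<le> m0 ^ k" .
qed


context
  fixes S :: "nat set" and i :: nat
  assumes S: "S \<subseteq> {1..k*t}" "card S = k - 1" "\<forall>i<k. card (S \<inter> Jp i) \<le> 1"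
    and i: "i < k" "S \<inter> Jp i = {}" "\<forall>i'<k. i' \<noteq> i \<longrightarrow> card (S \<inter> Jp i') = 1"
begin

lemma finS: "finite S" using S finite_subset by blast

lemma tr_props:
  assumes f: "f \<in> PiE S W"
  shows "inj_on f S" "card (f ` S) = k - 1" "f ` S \<subseteq> V" "legal k P (f ` S)"
proof -
  have fa: "\<And>a. a \<in> S \<Longrightarrow> f a \<in> W a" using f by (simp add: PiE_mem)
  show inj: "inj_on f S"
  proof (rule inj_onI)
    fix a b assume ab: "a \<in> S" "b \<in> S" "f a = f b"
    show "a = b"
    proof (rule ccontr)
      assume "a \<noteq> b"
      then have "W a \<inter> W b = {}" using disjW ab S(1) by blast
      then show False using fa ab by force
    qed
  qed
  show "card (f ` S) = k - 1" using card_image[OF inj] S(2) by simp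
  show "f ` S \<subseteq> V" using fa cover S(1) by blast
  show "legal k P (f ` S)" unfolding legal_def
  proof (intro allI impI)
    fix i' assume i': "i' < k"
    have "f ` S \<inter> P i' \<subseteq> f ` (S \<inter> Jp i')"
    proof
      fix x assume "x \<in> f ` S \<inter> P i'"
      then obtain a where a: "a \<in> S" "x = f a" "x \<in> P i'" by auto
      obtain ia where ia: "ia < k" "a \<in> Jp ia" using Jp_cover a S(1) by blast
      have "x \<in> P ia" using WP[OF ia] fa a by auto
      then have "ia = i'" using Pdisj[OF ia(1) i'] a(3) by auto
      then show "x \<in> f ` (S \<inter> Jp i')" using a ia by auto
    qed
    then have "card (f ` S \<inter> P i') \<le> card (f ` (S \<inter> Jp i'))"
      by (rule card_mono[rotated]) (use finS in auto)
    also have "\<dots> \<le> card (S \<inter> Jp i')" by (rule card_image_le) (use finS in auto)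
    also have "\<dots> \<le> 1" using S(3) i' by auto
    finally show "card (f ` S \<inter> P i') \<le> 1" .
  qed
qed

lemma deg_bound:
  assumes f: "f \<in> PiE S W"
  shows "real (deg k E (f ` S)) \<le> real (card {w \<in> P i - V0. insert w (f ` S) \<in> E}) + real (card V0)"
proof -
  let ?T = "f ` S"
  let ?A = "{w. insert w ?T \<in> E}"
  have cT: "card ?T = k - 1" using tr_props[OF f] by simp
  have "{S'. card S' = k - card ?T \<and> ?T \<union> S' \<in> E} = (\<lambda>w. {w}) ` ?A"
  proof -
    have "k - card ?T = Suc 0" using cT k2 by simp
    then show ?thesis by (auto simp: card_1_singleton_iff)
  qed
  then have "deg k E ?T = card ?A" unfolding deg_def by (simp add: card_image)
  also have "?A \<subseteq> {w \<in> P i - V0. insert w ?T \<in> E} \<union> V0"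
  proof
    fix w assume w: "w \<in> ?A"
    show "w \<in> {w \<in> P i - V0. insert w ?T \<in> E} \<union> V0"
    proof (cases "w \<in> V0")
      case False
      have e: "insert w ?T \<subseteq> V" "card (insert w ?T) = k" "legal k P (insert w ?T)"
        using Eprops w by auto
      have wT: "w \<notin> ?T"
      proof
        assume "w \<in> ?T" then have "insert w ?T = ?T" by auto
        then show False using e(2) cT k2 by simp
      qed
      obtain i'' where i'': "i'' < k" "w \<in> P i''" using e(1) VP by auto
      have "i'' = i"
      proof (rule ccontr)
        assume ne: "i'' \<noteq> i"
        then have "card (S \<inter> Jp i'') = 1" using i(3) i''(1) by auto
        then obtain a where "S \<inter> Jp i'' = {a}" by (auto simp: card_1_singleton_iff)
        then have a: "a \<in> S" "a \<in> Jp i''" by auto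
        have fa: "f a \<in> P i''" using WP[OF i''(1) a(2)] f a(1) by (auto simp: PiE_mem)
        have "{w, f a} \<subseteq> insert w ?T \<inter> P i''" using fa i''(2) a(1) by auto
        moreover have "finite (insert w ?T \<inter> P i'')" using e(1) finV finite_subset by blast
        ultimately have "card {w, f a} \<le> card (insert w ?T \<inter> P i'')" by (rule card_mono[rotated])
        moreover have "card {w, f a} = 2"
        proof -
          have "w \<noteq> f a" using wT a(1) by auto
          then show ?thesis by simp
        qed
        moreover have "card (insert w ?T \<inter> P i'') \<le> 1" using e(3) i''(1) unfolding legal_def by auto
        ultimately show False by simp
      qed
      then show ?thesis using w False i'' by auto
    qed simp
  qed
  then have "card ?A \<le> card ({w \<in> P i - V0. insert w ?T \<in> E} \<union> V0)"
  proof (rule card_mono[rotated])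
    have "{w \<in> P i - V0. insert w ?T \<in> E} \<subseteq> V" using PV[OF i(1)] by auto
    moreover have "V0 \<subseteq> V" using cover by auto
    ultimately show "finite ({w \<in> P i - V0. insert w ?T \<in> E} \<union> V0)"
      using finV by (meson finite_UnI finite_subset)
  qed
  also have "\<dots> \<le> card {w \<in> P i - V0. insert w ?T \<in> E} + card V0" by (rule card_Un_le)
  finally show ?thesis by simp
qed


lemma ins_props: assumes j: "j \<in> Jp i"
  shows "insert j S \<subseteq> {1..k*t}" "card (insert j S) = k" "\<forall>i'<k. card (insert j S \<inter> Jp i') \<le> 1"
proof -
  show "insert j S \<subseteq> {1..k*t}" using S(1) Jp(1)[OF i(1)] j by auto
  have "j \<notin> S" using i(2) j by auto
  then show "card (insert j S) = k" using finS S(2) k2 by simp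
  show "\<forall>i'<k. card (insert j S \<inter> Jp i') \<le> 1"
  proof (intro allI impI)
    fix i' assume i': "i' < k"
    show "card (insert j S \<inter> Jp i') \<le> 1"
    proof (cases "i' = i")
      case True
      then have "insert j S \<inter> Jp i' = {j}" using i(2) j by auto
      then show ?thesis by simp
    next
      case False
      then have "j \<notin> Jp i'" using Jp_disj[OF i(1) i'] j by auto
      then have "insert j S \<inter> Jp i' = S \<inter> Jp i'" by auto
      then show ?thesis using S(3) i' by simp
    qed
  qed
qed

lemma ec_bound: assumes j: "j \<in> Jp i"
  shows "real (ec (insert j S)) \<le> real m0 ^ k * of_bool (insert j S \<in> cluster_edges k t P E W epss d)
     + real m0 ^ k * of_bool (insert j S \<in> Irr) + d * real m0 ^ k"
proof -
  let ?J = "insert j S"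
  note ip = ins_props[OF j]
  note ep = ec_props[OF ip(1) ip(2)]
  have lg: "legal k (cluster_parts (k*t) P W) ?J" using ip(3) legalC_iff by simp
  have le: "real (ec ?J) \<le> real m0 ^ k" using ep(3) by (metis of_nat_le_iff of_nat_power)
  have pos: "0 \<le> real m0 ^ k * of_bool (?J \<in> Irr)" "0 \<le> d * real m0 ^ k"
    "0 \<le> real m0 ^ k * of_bool (?J \<in> cluster_edges k t P E W epss d)" using d0 by auto
  show ?thesis
  proof (cases "?J \<in> cluster_edges k t P E W epss d")
    case True
    then have "real m0 ^ k * of_bool (?J \<in> cluster_edges k t P E W epss d) = real m0 ^ k" by simp
    then show ?thesis using le pos by linarith
  next
    case False
    show ?thesis
    proof (cases "eps_regular k E epss (cluster_tuple W ?J)")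
      case True
      then have "density k E (cluster_tuple W ?J) < d"
        using False ip lg unfolding cluster_edges_def by auto
      then have "real (ec ?J) / real m0 ^ k < d" using ep(2) by simp
      then have "real (ec ?J) < d * real m0 ^ k" using m01 by (simp add: divide_less_eq)
      then show ?thesis using pos by linarith
    next
      case False
      then have "?J \<in> Irr" using ip lg unfolding Irr_def by auto
      then have "real m0 ^ k * of_bool (?J \<in> Irr) = real m0 ^ k" by simp
      then show ?thesis using le pos by linarith
    qed
  qed
qed


lemma min_le: assumes "T \<subseteq> V" "card T = k - 1" "legal k P T"
  shows "min_legal_codeg k V P E \<le> deg k E T"
proof -
  let ?D = "{deg k E S | S. S \<subseteq> V \<and> card S = k - 1 \<and> legal k P S}"
  have "?D \<subseteq> deg k E ` Pow V" by auto
  then have "finite ?D" using finV by (meson finite_Pow_iff finite_imageI finite_subset)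
  moreover have "deg k E T \<in> ?D" using assms by auto
  ultimately show ?thesis unfolding min_legal_codeg_def by (rule Min_le)
qed

lemma key:
  "(1/2 + eps/2) * real t \<le> real (card (Jp i \<inter> {j. insert j S \<in> cluster_edges k t P E W epss d}))
     + real (card (Jp i \<inter> {j. insert j S \<in> Irr}))"
proof -
  define B where "B f = {w \<in> P i - V0. insert w (f ` S) \<in> E}" for f
  define Pairs where "Pairs = (SIGMA f:PiE S W. B f)"
  define Tg where "Tg = (SIGMA j:Jp i. {g \<in> PiE (insert j S) W. g ` insert j S \<in> E})"
  define cl where "cl w = (SOME j. j \<in> Jp i \<and> w \<in> W j)" for w
  define \<phi> where "\<phi> p = (cl (snd p), (fst p)(cl (snd p) := snd p))" for p :: "(nat \<Rightarrow> 'a) \<times> 'a"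
  have clp: "cl w \<in> Jp i \<and> w \<in> W (cl w)" if "w \<in> P i - V0" for w
  proof -
    have "\<exists>j. j \<in> Jp i \<and> w \<in> W j" using Jp(3)[OF i(1)] that by auto
    then show ?thesis unfolding cl_def by (rule someI_ex)
  qed
  have finJp: "finite (Jp i)" using Jp(1)[OF i(1)] finite_subset by blast
  have finPi: "finite (PiE J W)" if "J \<subseteq> {1..k*t}" for J
  proof (rule finite_PiE)
    show "finite J" using that finite_subset by blast
    show "finite (W a)" if "a \<in> J" for a using Wfin \<open>J \<subseteq> {1..k*t}\<close> that by blast
  qed
  have finB: "finite (B f)" for f
    unfolding B_def using PV[OF i(1)] finV by (auto intro: finite_subset)
  have "card Pairs \<le> card Tg"
  proof (rule card_inj_on_le)
    show "finite Tg" unfolding Tg_def using finJp ins_props(1) finPi by auto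
    show "inj_on \<phi> Pairs"
    proof (rule inj_onI)
      fix p q assume p: "p \<in> Pairs" and q: "q \<in> Pairs" and e: "\<phi> p = \<phi> q"
      obtain f w where pf: "p = (f, w)" by (cases p)
      obtain f' w' where qf: "q = (f', w')" by (cases q)
      have f: "f \<in> PiE S W" "w \<in> P i - V0" using p pf unfolding Pairs_def B_def by auto
      have f': "f' \<in> PiE S W" "w' \<in> P i - V0" using q qf unfolding Pairs_def B_def by auto
      have cj: "cl w = cl w'" and fe: "f(cl w := w) = f'(cl w' := w')" using e pf qf unfolding \<phi>_def by auto
      have ww: "w = w'" using fun_cong[OF fe, of "cl w"] cj by simp
      have cS: "cl w \<notin> S" using clp[OF f(2)] i(2) by auto
      have "f = f'"
      proof
        fix x show "f x = f' x"
        proof (cases "x = cl w")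
          case True then show ?thesis using PiE_arb[OF f(1) cS] PiE_arb[OF f'(1) cS] by simp
        next
          case False then show ?thesis using fun_cong[OF fe, of x] cj by simp
        qed
      qed
      then show "p = q" using pf qf ww by simp
    qed
    show "\<phi> ` Pairs \<subseteq> Tg"
    proof (rule image_subsetI)
      fix p assume p: "p \<in> Pairs"
      obtain f w where pf: "p = (f, w)" by (cases p)
      have f: "f \<in> PiE S W" "w \<in> P i - V0" "insert w (f ` S) \<in> E"
        using p pf unfolding Pairs_def B_def by auto
      let ?j = "cl w"
      have j: "?j \<in> Jp i" "w \<in> W ?j" using clp[OF f(2)] by auto
      have cS: "?j \<notin> S" using j i(2) by auto
      have g1: "f(?j := w) \<in> PiE (insert ?j S) W" using f(1) j(2) cS by (auto simp: PiE_iff extensional_def)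
      have g2: "f(?j := w) ` insert ?j S = insert w (f ` S)" using cS by auto
      have g3: "f(?j := w) ` insert ?j S \<in> E" by (subst g2) (rule f(3))
      have "(?j, f(?j := w)) \<in> Tg" unfolding Tg_def
        by (rule SigmaI[OF j(1)]) (use g1 g3 in blast)
      then show "\<phi> p \<in> Tg" unfolding \<phi>_def pf by simp
    qed
  qed
  moreover have "card Tg = (\<Sum>j\<in>Jp i. ec (insert j S))"
    unfolding Tg_def ec_def using finJp ins_props(1) finPi by (subst card_SigmaI) auto
  moreover have "card Pairs = (\<Sum>f\<in>PiE S W. card (B f))"
    unfolding Pairs_def using finPi[OF S(1)] finB by (subst card_SigmaI) auto
  ultimately have main: "(\<Sum>f\<in>PiE S W. real (card (B f))) \<le> (\<Sum>j\<in>Jp i. real (ec (insert j S)))"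
    by (metis of_nat_le_iff of_nat_sum)
  let ?c = "1/2 + eps - epss * real k"
  have lowf: "?c * real n \<le> real (card (B f))" if f: "f \<in> PiE S W" for f
  proof -
    have "(1/2 + eps) * real n \<le> real (deg k E (f ` S))"
      using mindeg min_le[OF tr_props(3)[OF f] tr_props(2)[OF f] tr_props(4)[OF f]] by linarith
    then show ?thesis using deg_bound[OF f] V0_small unfolding B_def by (simp add: algebra_simps)
  qed
  have cPi: "card (PiE S W) = m0 ^ (k - 1)"
  proof -
    have "card (PiE S W) = (\<Prod>a\<in>S. card (W a))" by (rule card_PiE[OF finS])
    also have "\<dots> = (\<Prod>a\<in>S. m0)" using S(1) cl_size by (intro prod.cong) auto
    finally show ?thesis using S(2) by simp
  qed
  have "(\<Sum>f\<in>PiE S W. ?c * real n) \<le> (\<Sum>f\<in>PiE S W. real (card (B f)))"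
    by (rule sum_mono) (rule lowf)
  then have L: "real m0 ^ (k - 1) * (?c * real n) \<le> (\<Sum>f\<in>PiE S W. real (card (B f)))"
    using cPi by simp
  let ?X = "real (card (Jp i \<inter> {j. insert j S \<in> cluster_edges k t P E W epss d}))
     + real (card (Jp i \<inter> {j. insert j S \<in> Irr}))"
  have "(\<Sum>j\<in>Jp i. real (ec (insert j S))) \<le> (\<Sum>j\<in>Jp i. real m0 ^ k * of_bool (insert j S \<in> cluster_edges k t P E W epss d)
     + real m0 ^ k * of_bool (insert j S \<in> Irr) + d * real m0 ^ k)"
    by (rule sum_mono) (rule ec_bound)
  also have "\<dots> = real m0 ^ k * (?X + d * real t)"
    using finJp Jp(2)[OF i(1)] by (simp add: sum.distrib sum_distrib_left[symmetric] algebra_simps)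
  finally have U: "real m0 ^ (k - 1) * (?c * real n) \<le> real m0 ^ k * (?X + d * real t)"
    using L main by linarith
  have nt: "real t * real m0 \<le> real n"
  proof -
    have "card (P i - V0) = (\<Sum>j\<in>Jp i. card (W j))"
      unfolding Jp(3)[OF i(1)]
    proof (rule card_UN_disjoint)
      show "finite (Jp i)" by (rule finJp)
      show "\<forall>j\<in>Jp i. finite (W j)" using Jp(1)[OF i(1)] Wfin by blast
      show "\<forall>j\<in>Jp i. \<forall>j'\<in>Jp i. j \<noteq> j' \<longrightarrow> W j \<inter> W j' = {}"
        using Jp(1)[OF i(1)] disjW by blast
    qed
    also have "\<dots> = t * m0" using Jp(1,2)[OF i(1)] cl_size by (subst sum.cong[of _ _ _ "\<lambda>_. m0"]) auto
    finally have "t * m0 \<le> card (P i)" by (metis card_Diff_subset_Int card_mono finV PV[OF i(1)] finite_subset Diff_subset)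
    then show ?thesis using parts_size i(1) by (metis of_nat_le_iff of_nat_mult)
  qed
  have cpos: "0 < ?c" using par1 d0 eps0 by (simp add: mult.commute)
  have M: "0 < real m0 ^ (k - 1)" using m01 by simp
  have mk: "real m0 ^ k = real m0 ^ (k - 1) * real m0" using k2
    by (metis Suc_diff_1 le_trans one_le_numeral power_Suc2 linorder_not_le not_one_le_zero zero_less_iff_neq_zero)
  have "?c * (real t * real m0) \<le> ?c * real n" using nt cpos by (intro mult_left_mono) auto
  then have "real m0 ^ (k - 1) * (?c * (real t * real m0)) \<le> real m0 ^ (k - 1) * (real m0 * (?X + d * real t))"
    using U M mk by (smt (verit) mult.assoc mult_left_mono)
  then have "?c * (real t * real m0) \<le> real m0 * (?X + d * real t)" using M by simp
  then have "real m0 * (?c * real t) \<le> real m0 * (?X + d * real t)" by (simp add: algebra_simps)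
  then have "?c * real t \<le> ?X + d * real t" using m01 by simp
  moreover have "(1/2 + eps/2) \<le> ?c - d" using par1 by (simp add: mult.commute)
  then have "(1/2 + eps/2) * real t \<le> (?c - d) * real t" by (intro mult_right_mono) auto
  ultimately show ?thesis by (simp add: algebra_simps)
qed

end


lemma finIrr: "finite Irr"
proof -
  have "Irr \<subseteq> Pow {1..k*t}" unfolding Irr_def by auto
  then show ?thesis by (simp add: finite_subset)
qed

lemma bad_irr:
  assumes S: "S \<subseteq> {1..k*t}" "card S = k - 1" "legal k (cluster_parts (k*t) P W) S"
    and dg: "real (deg k (cluster_edges k t P E W epss d) S) < (1/2 + eps/4) * real t"
  shows "sqrt epss * real t \<le> real (card (Irr \<inter> {J. S \<subseteq> J}))"
proof -
  have S3: "\<forall>i<k. card (S \<inter> Jp i) \<le> 1" using S(3) legalC_iff by simp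
  obtain i where i: "i < k" "S \<inter> Jp i = {}" "\<forall>i'<k. i' \<noteq> i \<longrightarrow> card (S \<inter> Jp i') = 1"
    using missing[OF S(1,2) S3] by blast
  note K = key[OF S(1,2) S3 i]
  let ?R = "cluster_edges k t P E W epss d"
  have finS: "finite S" using S(1) finite_subset by blast
  have "card (Jp i \<inter> {j. insert j S \<in> ?R}) \<le> deg k ?R S"
  proof -
    have eq: "k - card S = 1" using S(2) k2 by simp
    have "(\<lambda>j. {j}) ` (Jp i \<inter> {j. insert j S \<in> ?R}) \<subseteq> {S'. card S' = k - card S \<and> S \<union> S' \<in> ?R}"
      using eq by auto
    moreover have "finite {S'. card S' = k - card S \<and> S \<union> S' \<in> ?R}"
    proof -
      have "{S'. card S' = k - card S \<and> S \<union> S' \<in> ?R} \<subseteq> Pow {1..k*t}"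
        unfolding cluster_edges_def by auto
      then show ?thesis by (simp add: finite_subset)
    qed
    ultimately have "card ((\<lambda>j. {j}) ` (Jp i \<inter> {j. insert j S \<in> ?R})) \<le> deg k ?R S"
      unfolding deg_def by (rule card_mono[rotated])
    then show ?thesis by (simp add: card_image)
  qed
  have "card (Jp i \<inter> {j. insert j S \<in> Irr}) \<le> card (Irr \<inter> {J. S \<subseteq> J})"
  proof -
    have "inj_on (\<lambda>j. insert j S) (Jp i \<inter> {j. insert j S \<in> Irr})"
    proof (rule inj_onI)
      fix a b assume ab: "a \<in> Jp i \<inter> {j. insert j S \<in> Irr}" "b \<in> Jp i \<inter> {j. insert j S \<in> Irr}"
        "insert a S = insert b S"
      have "a \<notin> S" "b \<notin> S" using ab i(2) by auto
      then show "a = b" using ab(3) by (metis insertE insertI1)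
    qed
    moreover have "(\<lambda>j. insert j S) ` (Jp i \<inter> {j. insert j S \<in> Irr}) \<subseteq> Irr \<inter> {J. S \<subseteq> J}" by auto
    ultimately show ?thesis using finIrr by (metis card_inj_on_le finite_Int)
  qed
  then show ?thesis using K par2 dg \<open>card (Jp i \<inter> {j. insert j S \<in> ?R}) \<le> deg k ?R S\<close> t1
  proof -
    assume a: "card (Jp i \<inter> {j. insert j S \<in> Irr}) \<le> card (Irr \<inter> {J. S \<subseteq> J})"
    have b: "real (card (Jp i \<inter> {j. insert j S \<in> ?R})) \<le> real (deg k ?R S)"
      using \<open>card (Jp i \<inter> {j. insert j S \<in> ?R}) \<le> deg k ?R S\<close> by simp
    have "sqrt epss * real t \<le> eps / 4 * real t" using par2 by (intro mult_right_mono) auto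
    then show ?thesis using K a b dg by (simp add: algebra_simps)
  qed
qed

lemma final:
  assumes most_regular: "real (card Irr) \<le> epss * real (k*t) ^ k"
  shows "real (card {S. S \<subseteq> {1..k*t} \<and> card S = k - 1 \<and>
                        legal k (cluster_parts (k*t) P W) S \<and>
                        real (deg k (cluster_edges k t P E W epss d) S)
                          < (1/2 + eps/4) * real t})
         \<le> real k ^ (k+1) * sqrt epss * real t ^ (k - 1)"
proof -
  define Bad where "Bad = {S. S \<subseteq> {1..k*t} \<and> card S = k - 1 \<and>
                        legal k (cluster_parts (k*t) P W) S \<and>
                        real (deg k (cluster_edges k t P E W epss d) S)
                          < (1/2 + eps/4) * real t}"
  have finBad: "finite Bad"
  proof -
    have "Bad \<subseteq> Pow {1..k*t}" unfolding Bad_def by auto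
    then show ?thesis by (simp add: finite_subset)
  qed
  have "(\<Sum>S\<in>Bad. sqrt epss * real t) \<le> (\<Sum>S\<in>Bad. real (card (Irr \<inter> {J. S \<subseteq> J})))"
    by (rule sum_mono) (use bad_irr in \<open>auto simp: Bad_def\<close>)
  also have "\<dots> = (\<Sum>S\<in>Bad. \<Sum>J\<in>Irr. of_bool (S \<subseteq> J))"
    using finIrr by simp
  also have "\<dots> = (\<Sum>J\<in>Irr. \<Sum>S\<in>Bad. of_bool (S \<subseteq> J))" by (rule sum.swap)
  also have "\<dots> = (\<Sum>J\<in>Irr. real (card (Bad \<inter> {S. S \<subseteq> J})))" using finBad by simp
  also have "\<dots> \<le> (\<Sum>J\<in>Irr. real k)"
  proof (rule sum_mono)
    fix J assume J: "J \<in> Irr"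
    then have Jp: "J \<subseteq> {1..k*t}" "card J = k" unfolding Irr_def by auto
    have finJ: "finite J" using Jp finite_subset by blast
    have "Bad \<inter> {S. S \<subseteq> J} \<subseteq> {S. S \<subseteq> J \<and> card S = k - 1}" unfolding Bad_def by auto
    then have "card (Bad \<inter> {S. S \<subseteq> J}) \<le> card {S. S \<subseteq> J \<and> card S = k - 1}"
      by (rule card_mono[rotated]) (use finJ in simp)
    also have "\<dots> = k choose (k - 1)" using n_subsets[OF finJ] Jp by simp
    also have "\<dots> = k" using k2 by (simp add: binomial_symmetric[symmetric])
    finally show "real (card (Bad \<inter> {S. S \<subseteq> J})) \<le> real k" by simp
  qed
  also have "\<dots> = real k * real (card Irr)" by simp
  also have "\<dots> \<le> real k * (epss * real (k*t) ^ k)" using most_regular by (intro mult_left_mono) auto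
  finally have A: "real (card Bad) * (sqrt epss * real t) \<le> real k * (epss * real (k*t) ^ k)" by simp
  have tk: "real t ^ k = real t * real t ^ (k - 1)" using k2
    by (metis Suc_diff_1 power_Suc le_trans one_le_numeral linorder_not_le not_one_le_zero zero_less_iff_neq_zero)
  have es: "epss = sqrt epss * sqrt epss" using epss0 by simp
  have eq: "real k * (epss * real (k*t) ^ k) = (real k ^ (k+1) * sqrt epss * real t ^ (k - 1)) * (sqrt epss * real t)"
    by (subst es) (simp add: tk power_mult_distrib algebra_simps)
  then have "real (card Bad) * (sqrt epss * real t) \<le> (real k ^ (k+1) * sqrt epss * real t ^ (k - 1)) * (sqrt epss * real t)"
    using A by (simp only: eq)
  moreover have "0 < sqrt epss * real t" using epss0 t1 by simp
  ultimately have "real (card Bad) \<le> real k ^ (k+1) * sqrt epss * real t ^ (k - 1)"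
    using mult_le_cancel_right_pos by blast
  then show ?thesis unfolding Bad_def .
qed

end

theorem proposition6p3:
  fixes k n t m0 :: nat and eps d epss :: real
    and V V0 :: "'a set" and P W :: "nat \<Rightarrow> 'a set" and E :: "'a set set"
  assumes "k \<ge> 2" and "n \<ge> 1" and "t \<ge> 1" and "m0 \<ge> 1"
    and "0 < eps" and "eps < 1" and "d > 0" and "epss > 0"
    and "d + real k * epss \<le> eps / 2" and "sqrt epss \<le> eps / 4"
    and H: "kpartite_kgraph k V P E"
    and parts_size: "\<forall>i<k. card (P i) = n"
    and mindeg: "real (min_legal_codeg k V P E) \<ge> (1/2 + eps) * real n"
    and cover: "V = V0 \<union> (\<Union>j\<in>{1..k*t}. W j)"
    and disj0: "\<forall>j\<in>{1..k*t}. V0 \<inter> W j = {}"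
    and disjW: "\<forall>j\<in>{1..k*t}. \<forall>j'\<in>{1..k*t}. j \<noteq> j' \<longrightarrow> W j \<inter> W j' = {}"
    and V0_small: "real (card V0) \<le> epss * real k * real n"
    and parts_union: "\<forall>i<k. \<exists>J\<subseteq>{1..k*t}. card J = t \<and> P i - V0 = (\<Union>j\<in>J. W j)"
    and cl_size: "\<forall>j\<in>{1..k*t}. card (W j) = m0"
    and most_regular: "real (card {J. J \<subseteq> {1..k*t} \<and> card J = k \<and>
                           legal k (cluster_parts (k*t) P W) J \<and>
                           \<not> eps_regular k E epss (cluster_tuple W J)})
                       \<le> epss * real (k*t) ^ k"
  shows "real (card {S. S \<subseteq> {1..k*t} \<and> card S = k - 1 \<and>
                        legal k (cluster_parts (k*t) P W) S \<and>
                        real (deg k (cluster_edges k t P E W epss d) S)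
                          < (1/2 + eps/4) * real t})
         \<le> real k ^ (k+1) * sqrt epss * real t ^ (k - 1)"
  proof -
  interpret setup6 k n t m0 eps d epss V V0 P W E
    by (unfold_locales) (use assms in auto)
  show ?thesis by (rule final) (use most_regular in \<open>simp add: Irr_def\<close>)
qed

end
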